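(* Let $d$ be a positive integer, $b\geqslant 5$ an integer, $a>0$ a real number with $\zeta=\log_b a\notin\mathbb{Q}$. Let $\mathbf{w}=(\mathbf{w}_n)_{n\geqslant1}$ where $\mathbf{w}_n$ is the most significant digit of $a^{n^d}$ in base $b$. Define $f:\mathbb{T}^d\to\mathbb{T}^d$ by $f(x)_i=\{\zeta+\sum_{j=1}^{i}\binom{i}{j}x_j\}$ for $i=1,\dots,d$, and for $t\in\{1,\dots,b-1\}$ let $U_t=\{x\in\mathbb{T}^d:\log_b t\leqslant x_d<\log_b(t+1)\}$. For a finite word $\mathbf{u}=u_1\cdots u_n$ over $\{1,\dots,b-1\}$ set $U_{\mathbf{u}}=U_{u_1}\cap f^{-1}(U_{u_2})\cap\cdots\cap f^{-(n-1)}(U_{u_n})$. Then $\mathbf{u}$ is a factor of $\mathbf{w}$ if and only if $U_{\mathbf{u}}$ has non-empty interior in $\mathbb{T}^d$.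
   Context: $\mathbb{T}^d=\mathbb{R}^d/\mathbb{Z}^d$ identified with $[0,1)^d$, $\{y\}$ is the fractional part. The most significant digit of a nonzero real $x$ in base $b$ is the unique $j\in\{1,\dots,b-1\}$ with $b^m j\leqslant|x|<b^m(j+1)$ for some integer $m$. A finite word $\mathbf{u}$ of length $n$ is a factor of $\mathbf{w}$ if $\mathbf{u}=\mathbf{w}_k\mathbf{w}_{k+1}\cdots\mathbf{w}_{k+n-1}$ for some $k\geqslant1$. (With $v_k=(\{\zeta k\},\dots,\{\zeta k^d\})$ one has $v_{k+1}=f(v_k)$ and $\mathbf{w}_k=t$ iff $v_k\in U_t$.) *)

theory Defs
  imports Complex_Main
begin

text \<open>Points of the torus T^d = R^d/Z^d are represented by their canonical
 representatives in [0,1)^d, as functions nat => real that are supported on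
 the coordinates 1..d (other coordinates are 0).\<close>

definition torus :: "nat \<Rightarrow> (nat \<Rightarrow> real) set" where
  "torus d = {x. (\<forall>i\<in>{1..d}. 0 \<le> x i \<and> x i < 1) \<and> (\<forall>i. i \<notin> {1..d} \<longrightarrow> x i = 0)}"

definition torus_proj :: "nat \<Rightarrow> (nat \<Rightarrow> real) \<Rightarrow> (nat \<Rightarrow> real)" where
  "torus_proj d y = (\<lambda>i. if i \<in> {1..d} then frac (y i) else 0)"

text \<open>Open sets of T^d in the quotient topology: V is open iff its preimage
 under the quotient map is open in R^d.\<close>
definition torus_open :: "nat \<Rightarrow> (nat \<Rightarrow> real) set \<Rightarrow> bool" where
  "torus_open d V \<longleftrightarrow> V \<subseteq> torus d \<and>
     (\<forall>y. torus_proj d y \<in> V \<longrightarrow>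
        (\<exists>e>0. \<forall>z. (\<forall>i\<in>{1..d}. \<bar>z i - y i\<bar> < e) \<longrightarrow> torus_proj d z \<in> V))"

definition torus_nonempty_interior :: "nat \<Rightarrow> (nat \<Rightarrow> real) set \<Rightarrow> bool" where
  "torus_nonempty_interior d U \<longleftrightarrow> (\<exists>V. torus_open d V \<and> V \<noteq> {} \<and> V \<subseteq> U)"

definition msd :: "nat \<Rightarrow> real \<Rightarrow> nat" where
  "msd b x = (THE j. j \<in> {1..b-1} \<and>
      (\<exists>m::int. real b powr of_int m * real j \<le> \<bar>x\<bar> \<and> \<bar>x\<bar> < real b powr of_int m * real (j+1)))"

definition wseq :: "nat \<Rightarrow> real \<Rightarrow> nat \<Rightarrow> nat \<Rightarrow> nat" where
  "wseq b a d n = msd b (a ^ (n ^ d))"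

definition is_factor :: "nat list \<Rightarrow> (nat \<Rightarrow> nat) \<Rightarrow> bool" where
  "is_factor u w \<longleftrightarrow> (\<exists>k\<ge>1. \<forall>i<length u. u ! i = w (k + i))"

definition tmap :: "nat \<Rightarrow> real \<Rightarrow> (nat \<Rightarrow> real) \<Rightarrow> (nat \<Rightarrow> real)" where
  "tmap d \<zeta> x = (\<lambda>i. if i \<in> {1..d} then frac (\<zeta> + (\<Sum>j=1..i. real (i choose j) * x j)) else 0)"

definition Uset :: "nat \<Rightarrow> nat \<Rightarrow> nat \<Rightarrow> (nat \<Rightarrow> real) set" where
  "Uset b d t = {x \<in> torus d. log (real b) (real t) \<le> x d \<and> x d < log (real b) (real t + 1)}"

definition Uword :: "nat \<Rightarrow> nat \<Rightarrow> real \<Rightarrow> nat list \<Rightarrow> (nat \<Rightarrow> real) set" where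
  "Uword b d \<zeta> u = {x \<in> torus d. \<forall>k<length u. (tmap d \<zeta> ^^ k) x \<in> Uset b d (u ! k)}"

end

theory Submission
  imports Defs "HOL-Analysis.Analysis"
begin


lemma shift_sum_bound:
  fixes f :: "nat \<Rightarrow> 'a::real_normed_vector"
  assumes "\<And>k. norm (f k) \<le> B"
  shows "norm ((\<Sum>k<N. f (k+h)) - (\<Sum>k<N. f k)) \<le> 2 * real h * B"
proof -
  have e1: "(\<Sum>k<N. f (k+h)) = (\<Sum>k\<in>{h..<N+h}. f k)"
    by (metis add.commute lessThan_atLeast0 sum.shift_bounds_nat_ivl add_0)
  have e2: "(\<Sum>k<N+h. f k) = (\<Sum>k<h. f k) + (\<Sum>k\<in>{h..<N+h}. f k)"
    by (metis le_add2 lessThan_atLeast0 sum.atLeastLessThan_concat zero_le)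
  have e3: "(\<Sum>k<N+h. f k) = (\<Sum>k<N. f k) + (\<Sum>k\<in>{N..<N+h}. f k)"
    by (metis le_add1 lessThan_atLeast0 sum.atLeastLessThan_concat zero_le)
  have "(\<Sum>k<N. f (k+h)) - (\<Sum>k<N. f k) = (\<Sum>k\<in>{N..<N+h}. f k) - (\<Sum>k<h. f k)"
    using e1 e2 e3 by (simp add: algebra_simps)
  also have "norm \<dots> \<le> norm (\<Sum>k\<in>{N..<N+h}. f k) + norm (\<Sum>k<h. f k)"
    by (rule norm_triangle_ineq4)
  also have "norm (\<Sum>k\<in>{N..<N+h}. f k) \<le> real h * B"
    using sum_norm_le[of "{N..<N+h}" f "\<lambda>_. B"] assms by simp
  also have "norm (\<Sum>k<h. f k) \<le> real h * B"
    using sum_norm_le[of "{..<h}" f "\<lambda>_. B"] assms by simp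
  finally show ?thesis by (simp add: mult_ac)
qed

lemma vdc_bound:
  fixes u :: "nat \<Rightarrow> complex" and N H :: nat
  assumes u1: "\<And>k. norm (u k) \<le> 1" and H1: "H \<ge> 1"
  defines "D \<equiv> (\<Sum>r\<in>{1..<H}. norm (\<Sum>k<N. u (k+r) * cnj (u k)))"
  shows "norm (\<Sum>k<N. u k) \<le> sqrt (real N * (real H * real N + (real H)^2 * (D + 2 * real H))) / real H + 2 * real H"
proof -
  define w where "w k = (\<Sum>h<H. u (k+h))" for k
  define S where "S = (\<Sum>k<N. u k)"
  define G where "G h h' = (\<Sum>k<N. u (k+h) * cnj (u (k+h')))" for h h'
  define X where "X = D + 2 * real H"
  have D0: "D \<ge> 0" unfolding D_def by (intro sum_nonneg) auto
  have a: "norm (of_nat H * S - (\<Sum>k<N. w k)) \<le> 2 * (real H)^2"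
  proof -
    have "(\<Sum>k<N. w k) = (\<Sum>h<H. \<Sum>k<N. u (k+h))"
      unfolding w_def by (rule sum.swap)
    hence "of_nat H * S - (\<Sum>k<N. w k) = (\<Sum>h<H. S - (\<Sum>k<N. u (k+h)))"
      by (simp add: sum_subtractf)
    also have "norm \<dots> \<le> (\<Sum>h<H. 2 * real H)"
    proof (rule sum_norm_le)
      fix h assume "h \<in> {..<H}"
      have "norm (S - (\<Sum>k<N. u (k+h))) \<le> 2 * real h * 1"
        using shift_sum_bound[where f=u and B=1 and N=N and h=h] u1 unfolding S_def by (simp add: norm_minus_commute)
      also have "\<dots> \<le> 2 * real H" using \<open>h \<in> {..<H}\<close> by simp
      finally show "norm (S - (\<Sum>k<N. u (k+h))) \<le> 2 * real H" .
    qed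
    finally show ?thesis by (simp add: power2_eq_square)
  qed
  have b: "(norm (\<Sum>k<N. w k))^2 \<le> real N * (\<Sum>k<N. (norm (w k))^2)"
  proof -
    have "norm (\<Sum>k<N. w k) \<le> (\<Sum>k<N. norm (w k))" by (rule norm_sum)
    hence "(norm (\<Sum>k<N. w k))^2 \<le> (\<Sum>k<N. norm (w k))^2"
      by (simp add: power_mono)
    also have "\<dots> \<le> (\<Sum>k<N. (norm (w k))^2) * card {..<N}"
      by (rule sum_squared_le_sum_of_squares)
    finally show ?thesis by (simp add: mult_ac)
  qed
  have c: "(\<Sum>k<N. (norm (w k))^2) \<le> (\<Sum>h<H. \<Sum>h'<H. norm (G h h'))"
  proof -
    have "complex_of_real (\<Sum>k<N. (norm (w k))^2) = (\<Sum>k<N. w k * cnj (w k))"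
      by (simp add: complex_norm_square del: of_real_power)
    also have "\<dots> = (\<Sum>k<N. \<Sum>h<H. \<Sum>h'<H. u (k+h) * cnj (u (k+h')))"
      unfolding w_def by (simp add: cnj_sum sum_product)
    also have "\<dots> = (\<Sum>h<H. \<Sum>h'<H. G h h')"
      unfolding G_def by (simp add: sum.swap[of _ "{..<N}"])
    finally have "norm (complex_of_real (\<Sum>k<N. (norm (w k))^2)) = norm (\<Sum>h<H. \<Sum>h'<H. G h h')"
      by (simp only:)
    moreover have "norm (complex_of_real (\<Sum>k<N. (norm (w k))^2)) = (\<Sum>k<N. (norm (w k))^2)"
    proof -
      have "(\<Sum>k<N. (norm (w k))^2) \<ge> 0" by (intro sum_nonneg) simp
      thus ?thesis by (simp only: norm_of_real abs_of_nonneg)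
    qed
    ultimately have "(\<Sum>k<N. (norm (w k))^2) = norm (\<Sum>h<H. \<Sum>h'<H. G h h')" by simp
    also have "\<dots> \<le> (\<Sum>h<H. norm (\<Sum>h'<H. G h h'))" by (rule norm_sum)
    also have "\<dots> \<le> (\<Sum>h<H. \<Sum>h'<H. norm (G h h'))"
      by (intro sum_mono norm_sum)
    finally show ?thesis .
  qed
  have e: "norm (G h h') \<le> X" if "h < H" "h' < H" "h \<noteq> h'" for h h'
  proof -
    have main: "norm (G h h') \<le> X" if "h < H" "h' < h" for h h'
    proof -
      define g where "g k = u (k + (h - h')) * cnj (u k)" for k
      have "G h h' = (\<Sum>k<N. g (k+h'))"
        unfolding G_def g_def using that by (intro sum.cong) (auto simp: algebra_simps)
      moreover have "norm ((\<Sum>k<N. g (k+h')) - (\<Sum>k<N. g k)) \<le> 2 * real h' * 1"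
        by (rule shift_sum_bound) (simp add: g_def norm_mult u1 mult_le_one)
      moreover have "norm (\<Sum>k<N. g k) \<le> D"
        unfolding D_def g_def
        by (rule member_le_sum[of "h - h'" "{1..<H}" "\<lambda>r. norm (\<Sum>k<N. u (k+r) * cnj (u k))"])
           (use that in auto)
      ultimately have "norm (G h h') \<le> D + 2 * real h'"
        by (smt (verit, ccfv_threshold) norm_triangle_ineq2)
      thus ?thesis unfolding X_def using that by simp
    qed
    show ?thesis
    proof (cases "h' < h")
      case True thus ?thesis using main that by blast
    next
      case False
      hence "h < h'" using that by simp
      have "G h h' = cnj (G h' h)" unfolding G_def by (simp add: cnj_sum mult.commute)
      thus ?thesis using main[of h' h] \<open>h < h'\<close> that by simp
    qed
  qed
  have d: "norm (G h h) \<le> real N" for h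
  proof -
    have "norm (G h h) \<le> (\<Sum>k<N. norm (u (k+h) * cnj (u (k+h))))"
      unfolding G_def by (rule norm_sum)
    also have "\<dots> \<le> (\<Sum>k<N. 1)"
      by (intro sum_mono) (simp add: norm_mult u1 mult_le_one)
    finally show ?thesis by simp
  qed
  have X0: "X \<ge> 0" unfolding X_def using D0 by simp
  have f: "(\<Sum>h<H. \<Sum>h'<H. norm (G h h')) \<le> real H * real N + (real H)^2 * X"
  proof -
    have "(\<Sum>h<H. \<Sum>h'<H. norm (G h h')) \<le> (\<Sum>h<H. \<Sum>h'<H. (if h' = h then real N else 0) + X)"
    proof (intro sum_mono)
      fix h h' assume "h \<in> {..<H}" "h' \<in> {..<H}"
      thus "norm (G h h') \<le> (if h' = h then real N else 0) + X"
        using d[of h] e[of h h'] X0 by auto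
    qed
    also have "\<dots> = real H * real N + (real H)^2 * X"
      by (simp add: sum.distrib power2_eq_square algebra_simps)
    finally show ?thesis .
  qed
  have nw: "norm (\<Sum>k<N. w k) \<le> sqrt (real N * (real H * real N + (real H)^2 * X))"
  proof -
    have "(norm (\<Sum>k<N. w k))^2 \<le> real N * (real H * real N + (real H)^2 * X)"
      using b c f by (meson order_trans mult_left_mono of_nat_0_le_iff)
    thus ?thesis by (simp add: real_le_rsqrt)
  qed
  have "real H * norm S \<le> norm (\<Sum>k<N. w k) + 2 * (real H)^2"
    using a norm_triangle_ineq2[of "of_nat H * S" "\<Sum>k<N. w k"]
    by (simp add: norm_mult)
  hence "real H * norm S \<le> sqrt (real N * (real H * real N + (real H)^2 * X)) + 2 * (real H)^2"
    using nw by linarith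
  hence "norm S \<le> (sqrt (real N * (real H * real N + (real H)^2 * X)) + 2 * (real H)^2) / real H"
    using H1 by (simp add: field_simps)
  also have "\<dots> = sqrt (real N * (real H * real N + (real H)^2 * X)) / real H + 2 * real H"
    using H1 by (simp add: field_simps power2_eq_square)
  finally show ?thesis unfolding S_def X_def .
qed

lemma vdc:
  fixes u :: "nat \<Rightarrow> complex"
  assumes u1: "\<And>k. norm (u k) \<le> 1"
    and corr: "\<And>r. r \<ge> 1 \<Longrightarrow> (\<lambda>N. (\<Sum>k<N. u (k+r) * cnj (u k)) / of_nat N) \<longlonglongrightarrow> 0"
  shows "(\<lambda>N. (\<Sum>k<N. u k) / of_nat N) \<longlonglongrightarrow> 0"
proof (rule LIMSEQ_I)
  fix \<epsilon> :: real assume ep: "\<epsilon> > 0"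
  obtain n :: nat where n: "8 / \<epsilon>^2 < real n" using reals_Archimedean2 by blast
  define H where "H = max 1 n"
  have H1: "H \<ge> 1" unfolding H_def by simp
  have Hbig: "1 / real H < \<epsilon>^2 / 8"
  proof -
    have "8 / \<epsilon>^2 < real H" using n unfolding H_def by linarith
    hence "8 < real H * \<epsilon>^2" using ep by (simp add: field_simps)
    thus ?thesis using H1 by (simp add: field_simps)
  qed
  define D where "D N = (\<Sum>r\<in>{1..<H}. norm (\<Sum>k<N. u (k+r) * cnj (u k)))" for N
  have DN: "(\<lambda>N. D N / real N) \<longlonglongrightarrow> 0"
  proof -
    have "(\<lambda>N. \<Sum>r\<in>{1..<H}. norm ((\<Sum>k<N. u (k+r) * cnj (u k)) / of_nat N)) \<longlonglongrightarrow> (\<Sum>r\<in>{1..<H}. 0)"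
      by (intro tendsto_sum tendsto_norm_zero corr) auto
    moreover have "(\<Sum>r\<in>{1..<H}. norm ((\<Sum>k<N. u (k+r) * cnj (u k)) / of_nat N)) = D N / real N" for N
    proof -
      have nd: "norm (A / of_nat N) = norm A / real N" for A :: complex by (simp add: norm_divide)
      show ?thesis unfolding D_def nd by (rule sum_divide_distrib[symmetric])
    qed
    ultimately show ?thesis by simp
  qed
  have XN: "(\<lambda>N. (D N + 2 * real H) / real N) \<longlonglongrightarrow> 0"
  proof -
    have "(\<lambda>N. D N / real N + (2 * real H) / real N) \<longlonglongrightarrow> 0 + 0"
      by (intro tendsto_add DN lim_const_over_n)
    thus ?thesis by (simp add: add_divide_distrib)
  qed
  obtain N0 where N0: "\<And>N. N \<ge> N0 \<Longrightarrow> norm ((D N + 2 * real H) / real N - 0) < \<epsilon>^2 / 8"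
    using LIMSEQ_D[OF XN, of "\<epsilon>^2/8"] ep by auto
  have HN: "(\<lambda>N. (2 * real H) / real N) \<longlonglongrightarrow> 0" by (rule lim_const_over_n)
  obtain N1 where N1: "\<And>N. N \<ge> N1 \<Longrightarrow> norm ((2 * real H) / real N - 0) < \<epsilon> / 4"
    using LIMSEQ_D[OF HN, of "\<epsilon>/4"] ep by auto
  show "\<exists>no. \<forall>N\<ge>no. norm ((\<Sum>k<N. u k) / of_nat N - 0) < \<epsilon>"
  proof (intro exI allI impI)
    fix N assume "N \<ge> max (max N0 N1) 1"
    hence NN: "N \<ge> N0" "N \<ge> N1" "N \<ge> 1" by auto
    define X where "X = D N + 2 * real H"
    have X1: "X / real N < \<epsilon>^2 / 8" using N0[OF NN(1)] abs_ge_self[of "X / real N"] unfolding X_def real_norm_def diff_zero by linarith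
    have X2: "2 * real H / real N < \<epsilon> / 4" using N1[OF NN(2)] abs_ge_self[of "2 * real H / real N"] unfolding real_norm_def diff_zero by linarith
    have Npos: "real N > 0" using NN by simp
    have Hpos: "real H > 0" using H1 by simp
    have b: "norm (\<Sum>k<N. u k) \<le> sqrt (real N * (real H * real N + (real H)^2 * X)) / real H + 2 * real H"
      using vdc_bound[OF u1 H1, where N=N] unfolding X_def D_def by simp
    have "norm ((\<Sum>k<N. u k) / of_nat N - 0) = norm (\<Sum>k<N. u k) / real N"
      by (simp add: norm_divide)
    also have "\<dots> \<le> (sqrt (real N * (real H * real N + (real H)^2 * X)) / real H + 2 * real H) / real N"
      using b Npos by (simp add: divide_right_mono)
    also have "\<dots> = sqrt (real N * (real H * real N + (real H)^2 * X)) / (real H * real N) + 2 * real H / real N"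
      by (simp add: add_divide_distrib)
    also have "sqrt (real N * (real H * real N + (real H)^2 * X)) / (real H * real N)
             = sqrt (real N * (real H * real N + (real H)^2 * X) / (real H * real N)^2)"
      using Npos Hpos by (simp add: real_sqrt_divide)
    also have "real N * (real H * real N + (real H)^2 * X) / (real H * real N)^2 = 1 / real H + X / real N"
      using Npos Hpos by (simp add: field_simps power2_eq_square)
    also have "sqrt (1 / real H + X / real N) < sqrt ((\<epsilon>/2)^2)"
    proof (rule real_sqrt_less_mono)
      have "(\<epsilon>/2)^2 = \<epsilon>^2/8 + \<epsilon>^2/8" by (simp add: power_divide)
      thus "1 / real H + X / real N < (\<epsilon>/2)^2" using Hbig X1 by linarith
    qed
    also have "sqrt ((\<epsilon>/2)^2) = \<epsilon>/2" using ep by simp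
    finally have "norm ((\<Sum>k<N. u k) / of_nat N - 0) < \<epsilon>/2 + 2 * real H / real N" by simp
    thus "norm ((\<Sum>k<N. u k) / of_nat N - 0) < \<epsilon>" using X2 ep by linarith
  qed
qed



definition Dl :: "(nat \<Rightarrow> real) \<Rightarrow> nat \<Rightarrow> real" where
  "Dl p k = p (Suc k) - p k"

definition ee :: "real \<Rightarrow> complex" where
  "ee t = cis (2 * pi * t)"

lemma norm_ee [simp]: "norm (ee t) = 1" by (simp add: ee_def)

lemma ee_add: "ee (a + b) = ee a * ee b"
  by (simp add: ee_def cis_mult distrib_left)

lemma ee_diff: "ee (a - b) = ee a * cnj (ee b)"
  by (simp add: ee_def cis_mult cis_cnj right_diff_distrib)

lemma ee_neq_1: assumes "\<gamma> \<notin> \<rat>" shows "ee \<gamma> \<noteq> 1"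
proof
  assume "ee \<gamma> = 1"
  hence "exp (\<i> * complex_of_real (2 * pi * \<gamma>)) = 1" by (simp add: ee_def cis_conv_exp)
  then obtain n :: int where "2 * pi * \<gamma> = of_int (2 * n) * pi" by (auto simp: exp_eq_1)
  hence "\<gamma> = of_int n" by simp
  thus False using assms by simp
qed

lemma Dl_diff: "(Dl ^^ m) (\<lambda>k. f k - g k) = (\<lambda>k. (Dl ^^ m) f k - (Dl ^^ m) g k)"
  by (induction m) (auto simp: Dl_def algebra_simps)

lemma Dl_shift: "(Dl ^^ m) (\<lambda>k. f (k + r)) = (\<lambda>k. (Dl ^^ m) f (k + r))"
  by (induction m) (auto simp: Dl_def)

lemma Dl_const_step:
  assumes "\<And>k. Dl g k = c" shows "g (k + r) = g k + real r * c"
  using assms by (induction r) (auto simp: Dl_def algebra_simps)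

lemma weyl_base:
  assumes "\<gamma> \<notin> \<rat>" "\<And>k. Dl p k = \<gamma>"
  shows "(\<lambda>N. (\<Sum>k<N. ee (p k)) / of_nat N) \<longlonglongrightarrow> 0"
proof -
  define z where "z = ee \<gamma>"
  have z1: "z \<noteq> 1" using ee_neq_1[OF assms(1)] by (simp add: z_def)
  have pk: "p k = p 0 + real k * \<gamma>" for k using Dl_const_step[of p \<gamma> 0 k] assms(2) by simp
  have eek: "ee (p k) = ee (p 0) * z ^ k" for k
  proof -
    have "ee (real k * \<gamma>) = ee \<gamma> ^ k"
      unfolding ee_def Complex.DeMoivre by (simp only: mult.left_commute)
    thus ?thesis by (subst pk) (simp add: z_def ee_add)
  qed
  define B where "B = 2 / norm (z - 1)"
  have bnd: "norm ((\<Sum>k<N. ee (p k)) / of_nat N) \<le> B / real N" for N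
  proof -
    have "(\<Sum>k<N. ee (p k)) = ee (p 0) * ((z ^ N - 1) / (z - 1))"
    proof -
      have "(\<Sum>k<N. ee (p k)) = (\<Sum>k<N. ee (p 0) * z ^ k)"
        by (intro sum.cong refl eek)
      thus ?thesis by (simp add: sum_distrib_left[symmetric] geometric_sum[OF z1])
    qed
    hence "norm (\<Sum>k<N. ee (p k)) = norm (z ^ N - 1) / norm (z - 1)"
      by (simp add: norm_mult norm_divide)
    also have "norm (z ^ N - 1) \<le> 2"
    proof -
      have "norm (z ^ N - 1) \<le> norm (z ^ N) + norm (1::complex)" by (rule norm_triangle_ineq4)
      thus ?thesis by (simp add: z_def norm_power)
    qed
    hence "norm (z ^ N - 1) / norm (z - 1) \<le> B" unfolding B_def
      by (simp add: divide_right_mono)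
    finally show ?thesis by (simp add: norm_divide divide_right_mono)
  qed
  show ?thesis
    by (rule Lim_null_comparison[where g = "\<lambda>N. B / real N"])
       (use bnd in \<open>auto intro: lim_const_over_n\<close>)
qed

lemma weyl:
  assumes "m \<ge> 1" "\<gamma> \<notin> \<rat>" "\<And>k. (Dl ^^ m) p k = \<gamma>"
  shows "(\<lambda>N. (\<Sum>k<N. ee (p k)) / of_nat N) \<longlonglongrightarrow> 0"
  using assms
proof (induction m arbitrary: p \<gamma> rule: nat_induct_at_least)
  case base
  thus ?case using weyl_base[of \<gamma> p] by simp
next
  case (Suc m)
  show ?case
  proof (rule vdc)
    fix r :: nat assume r1: "r \<ge> 1"
    define q where "q k = p (k + r) - p k" for k
    have Dq: "(Dl ^^ m) q k = real r * \<gamma>" for k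
    proof -
      have "(Dl ^^ m) q = (\<lambda>k. (Dl ^^ m) p (k + r) - (Dl ^^ m) p k)"
        unfolding q_def Dl_diff Dl_shift by simp
      moreover have "Dl ((Dl ^^ m) p) k = \<gamma>" for k
        using Suc.prems(2)[of k] by simp
      ultimately show ?thesis using Dl_const_step[of "(Dl ^^ m) p" \<gamma> k r] by simp
    qed
    have rq: "real r * \<gamma> \<notin> \<rat>"
    proof
      assume "real r * \<gamma> \<in> \<rat>"
      hence "(real r * \<gamma>) / real r \<in> \<rat>" by (intro Rats_divide) auto
      thus False using r1 Suc.prems(1) by simp
    qed
    have "(\<lambda>N. (\<Sum>k<N. ee (q k)) / of_nat N) \<longlonglongrightarrow> 0"
      by (rule Suc.IH[OF rq]) (use Dq in simp)
    moreover have "ee (q k) = ee (p (k + r)) * cnj (ee (p k))" for k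
      unfolding q_def by (rule ee_diff)
    ultimately show "(\<lambda>N. (\<Sum>k<N. ee (p (k + r)) * cnj (ee (p k))) / of_nat N) \<longlonglongrightarrow> 0"
      by simp
  qed simp
qed



lemma Dl_sum: "(Dl ^^ m) (\<lambda>k. \<Sum>j\<in>S. a j * f j k) = (\<lambda>k. \<Sum>j\<in>S. a j * (Dl ^^ m) (f j) k)"
  by (induction m) (auto simp: Dl_def sum_subtractf right_diff_distrib)

lemma Dl_pow1: "Dl (\<lambda>k. (real k + c)^i) = (\<lambda>k. \<Sum>j<i. real (i choose j) * (real k + c)^j)"
proof
  fix k
  have "(real (Suc k) + c)^i = ((real k + c) + 1)^i" by (simp add: algebra_simps)
  also have "\<dots> = (\<Sum>j\<le>i. real (i choose j) * (real k + c)^j)"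
    by (simp add: binomial_ring)
  also have "\<dots> = (\<Sum>j<i. real (i choose j) * (real k + c)^j) + (real k + c)^i"
    by (simp add: lessThan_Suc_atMost[symmetric])
  finally show "Dl (\<lambda>k. (real k + c)^i) k = (\<Sum>j<i. real (i choose j) * (real k + c)^j)"
    by (simp add: Dl_def)
qed

lemma Dl_pow: "i \<le> m \<Longrightarrow> (Dl ^^ m) (\<lambda>k. (real k + c)^i) = (\<lambda>k. if i = m then fact m else 0)"
proof (induction m arbitrary: i)
  case 0 thus ?case by simp
next
  case (Suc m)
  have "(Dl ^^ Suc m) (\<lambda>k. (real k + c)^i) = (Dl ^^ m) (Dl (\<lambda>k. (real k + c)^i))"
    by (simp only: funpow_Suc_right comp_def)
  also have "\<dots> = (\<lambda>k. \<Sum>j<i. real (i choose j) * (Dl ^^ m) (\<lambda>k. (real k + c)^j) k)"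
    unfolding Dl_pow1 by (rule Dl_sum)
  also have "\<dots> = (\<lambda>k. \<Sum>j<i. real (i choose j) * (if j = m then fact m else 0))"
    using Suc by (intro ext sum.cong refl) auto
  also have "\<dots> = (\<lambda>k. if i = Suc m then fact (Suc m) else 0)"
  proof (cases "i = Suc m")
    case True
    have "(\<Sum>j<i. real (i choose j) * (if j = m then fact m else 0)) = real (i choose m) * fact m"
      using True by (simp add: sum.delta' if_distrib[of "\<lambda>x. real (i choose _) * x"] cong: if_cong)
    also have "\<dots> = fact (Suc m)" using True by simp
    finally show ?thesis using True by simp
  next
    case False
    hence "i \<le> m" using Suc by simp
    hence "(\<Sum>j<i. real (i choose j) * (if j = m then fact m else 0)) = 0"
      by (intro sum.neutral) auto
    thus ?thesis using False by simp
  qed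
  finally show ?case .
qed

lemma char_avg:
  fixes h :: "nat \<Rightarrow> int"
  assumes z: "\<zeta> \<notin> \<rat>" and i0: "i0 \<in> {1..d}" "h i0 \<noteq> 0"
  shows "(\<lambda>N. (\<Sum>k<N. ee (\<Sum>i\<in>{1..d}. of_int (h i) * (\<zeta> * (real k + 1)^i))) / of_nat N) \<longlonglongrightarrow> 0"
proof -
  define S where "S = {i\<in>{1..d}. h i \<noteq> 0}"
  have fS: "finite S" "S \<noteq> {}" using i0 unfolding S_def by auto
  define m where "m = Max S"
  have mS: "m \<in> S" unfolding m_def using fS by (rule Max_in)
  hence m1: "m \<ge> 1" "m \<le> d" "h m \<noteq> 0" unfolding S_def by auto
  have big: "h i = 0" if "i \<in> {1..d}" "i > m" for i
  proof (rule ccontr)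
    assume "h i \<noteq> 0"
    hence "i \<in> S" using that unfolding S_def by auto
    hence "i \<le> m" unfolding m_def using fS by simp
    thus False using that by simp
  qed
  define p where "p k = (\<Sum>i\<in>{1..d}. (of_int (h i) * \<zeta>) * (real k + 1)^i)" for k
  define \<gamma> where "\<gamma> = of_int (h m) * \<zeta> * fact m"
  have Dp: "(Dl ^^ m) p k = \<gamma>" for k
  proof -
    have "(Dl ^^ m) p = (\<lambda>k. \<Sum>i\<in>{1..d}. (of_int (h i) * \<zeta>) * (Dl ^^ m) (\<lambda>k. (real k + 1)^i) k)"
      unfolding p_def by (rule Dl_sum)
    also have "\<dots> = (\<lambda>k. \<Sum>i\<in>{1..d}. if i = m then \<gamma> else 0)"
    proof (intro ext sum.cong refl)
      fix k i assume i: "i \<in> {1..d}"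
      show "(of_int (h i) * \<zeta>) * (Dl ^^ m) (\<lambda>k. (real k + 1)^i) k = (if i = m then \<gamma> else 0)"
      proof (cases "i \<le> m")
        case True thus ?thesis using Dl_pow[OF True, of 1] by (auto simp: \<gamma>_def)
      next
        case False thus ?thesis using big[OF i] by simp
      qed
    qed
    also have "\<dots> = (\<lambda>k. \<gamma>)" using m1 by (simp add: sum.delta')
    finally show ?thesis by simp
  qed
  have g: "\<gamma> \<notin> \<rat>"
  proof
    assume "\<gamma> \<in> \<rat>"
    moreover have "real_of_int (h m) * fact m \<in> \<rat>"
      by (metis Rats_mult Rats_of_int Rats_of_nat of_nat_fact)
    ultimately have "\<gamma> / (of_int (h m) * fact m) \<in> \<rat>" by (intro Rats_divide)
    hence "\<zeta> \<in> \<rat>" using m1 unfolding \<gamma>_def by simp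
    thus False using z by simp
  qed
  have "(\<lambda>N. (\<Sum>k<N. ee (p k)) / of_nat N) \<longlonglongrightarrow> 0"
    by (rule weyl[OF m1(1) g Dp])
  moreover have "p k = (\<Sum>i\<in>{1..d}. of_int (h i) * (\<zeta> * (real k + 1)^i))" for k
    unfolding p_def by (simp add: mult.assoc)
  ultimately show ?thesis by simp
qed



lemma cos_cis: "complex_of_real (cos x) = (cis x + cis (- x)) / 2"
  by (simp add: complex_eq_iff)

lemma ee_0 [simp]: "ee 0 = 1" by (simp add: ee_def)

lemma ee_prod: "finite I \<Longrightarrow> (\<Prod>i\<in>I. ee (f i)) = ee (\<Sum>i\<in>I. f i)"
  by (induction I rule: finite_induct) (auto simp: ee_add)

lemma cos_pow_expand:
  "complex_of_real (cos (pi * t) ^ (2*M)) =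
     (\<Sum>a\<le>2*M. of_nat (2*M choose a) / 4^M * ee (of_int (int a - int M) * t))"
proof -
  have "complex_of_real (cos (pi * t) ^ (2*M)) = (cis (pi*t) + cis (-(pi*t)))^(2*M) / 4^M"
    by (simp add: cos_cis power_divide power_mult)
  also have "\<dots> = (\<Sum>a\<le>2*M. of_nat (2*M choose a) * cis (pi*t)^a * cis (-(pi*t))^(2*M-a)) / 4^M"
    by (simp add: binomial_ring)
  also have "\<dots> = (\<Sum>a\<le>2*M. of_nat (2*M choose a) / 4^M * ee (of_int (int a - int M) * t))"
    unfolding sum_divide_distrib
  proof (intro sum.cong refl)
    fix a assume "a \<in> {..2*M}"
    hence a: "a \<le> 2*M" by simp
    have "cis (pi*t)^a * cis (-(pi*t))^(2*M-a) = cis (real a * (pi*t) + real (2*M-a) * (-(pi*t)))"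
      by (simp add: Complex.DeMoivre cis_mult)
    also have "real a * (pi*t) + real (2*M-a) * (-(pi*t)) = 2 * pi * (of_int (int a - int M) * t)"
      using a by (simp add: of_nat_diff algebra_simps)
    finally have "cis (pi*t)^a * cis (-(pi*t))^(2*M-a) = ee (of_int (int a - int M) * t)"
      by (simp add: ee_def)
    thus "of_nat (2*M choose a) * cis (pi*t)^a * cis (-(pi*t))^(2*M-a) / 4^M =
          of_nat (2*M choose a) / 4^M * ee (of_int (int a - int M) * t)"
      by (simp add: mult.assoc)
  qed
  finally show ?thesis .
qed

definition kern :: "nat \<Rightarrow> nat \<Rightarrow> (nat \<Rightarrow> real) \<Rightarrow> (nat \<Rightarrow> real) \<Rightarrow> real" where
  "kern d M c y = (\<Prod>i\<in>{1..d}. cos (pi * (y i - c i)) ^ (2*M))"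

lemma kern_avg:
  assumes z: "\<zeta> \<notin> \<rat>"
  shows "(\<lambda>N. (\<Sum>k<N. kern d M c (\<lambda>i. \<zeta> * (real k + 1)^i)) / real N)
           \<longlonglongrightarrow> (real (2*M choose M) / 4^M)^d"
proof -
  define A where "A = PiE {1..d} (\<lambda>_. {..2*M})"
  define H where "H \<alpha> i = int (\<alpha> i) - int M" for \<alpha> :: "nat \<Rightarrow> nat" and i
  define coef where "coef \<alpha> = (\<Prod>i\<in>{1..d}. of_nat (2*M choose \<alpha> i) / 4^M * ee (- (of_int (H \<alpha> i) * c i)))"
    for \<alpha>
  define E where "E \<alpha> k = ee (\<Sum>i\<in>{1..d}. of_int (H \<alpha> i) * (\<zeta> * (real k + 1)^i))" for \<alpha> k
  define \<alpha>M where "\<alpha>M = restrict (\<lambda>_. M) {1..d}"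
  have fA: "finite A" unfolding A_def by (intro finite_PiE) auto
  have MA: "\<alpha>M \<in> A" unfolding A_def \<alpha>M_def by auto
  have expand: "complex_of_real (kern d M c y) = (\<Sum>\<alpha>\<in>A. coef \<alpha> * ee (\<Sum>i\<in>{1..d}. of_int (H \<alpha> i) * y i))"
    for y
  proof -
    have "complex_of_real (kern d M c y) = (\<Prod>i\<in>{1..d}. complex_of_real (cos (pi * (y i - c i)) ^ (2*M)))"
      unfolding kern_def by simp
    also have "\<dots> = (\<Prod>i\<in>{1..d}. \<Sum>a\<le>2*M. of_nat (2*M choose a) / 4^M * ee (of_int (int a - int M) * (y i - c i)))"
      by (simp only: cos_pow_expand)
    also have "\<dots> = (\<Sum>\<alpha>\<in>A. \<Prod>i\<in>{1..d}. of_nat (2*M choose \<alpha> i) / 4^M * ee (of_int (H \<alpha> i) * (y i - c i)))"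
      unfolding A_def H_def by (rule prod_sum_PiE) auto
    also have "\<dots> = (\<Sum>\<alpha>\<in>A. coef \<alpha> * ee (\<Sum>i\<in>{1..d}. of_int (H \<alpha> i) * y i))"
    proof (intro sum.cong refl)
      fix \<alpha>
      have "(\<Prod>i\<in>{1..d}. of_nat (2*M choose \<alpha> i) / 4^M * ee (of_int (H \<alpha> i) * (y i - c i)))
          = (\<Prod>i\<in>{1..d}. (of_nat (2*M choose \<alpha> i) / 4^M * ee (- (of_int (H \<alpha> i) * c i))) * ee (of_int (H \<alpha> i) * y i))"
      proof (intro prod.cong refl)
        fix i
        have "ee (of_int (H \<alpha> i) * (y i - c i)) = ee (- (of_int (H \<alpha> i) * c i) + of_int (H \<alpha> i) * y i)"
          by (simp add: algebra_simps)
        thus "of_nat (2*M choose \<alpha> i) / 4^M * ee (of_int (H \<alpha> i) * (y i - c i))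
            = (of_nat (2*M choose \<alpha> i) / 4^M * ee (- (of_int (H \<alpha> i) * c i))) * ee (of_int (H \<alpha> i) * y i)"
          by (simp only: ee_add mult.assoc)
      qed
      also have "\<dots> = coef \<alpha> * (\<Prod>i\<in>{1..d}. ee (of_int (H \<alpha> i) * y i))"
        unfolding coef_def by (rule prod.distrib)
      also have "\<dots> = coef \<alpha> * ee (\<Sum>i\<in>{1..d}. of_int (H \<alpha> i) * y i)"
        by (simp add: ee_prod)
      finally show "(\<Prod>i\<in>{1..d}. of_nat (2*M choose \<alpha> i) / 4^M * ee (of_int (H \<alpha> i) * (y i - c i)))
          = coef \<alpha> * ee (\<Sum>i\<in>{1..d}. of_int (H \<alpha> i) * y i)" .
    qed
    finally show ?thesis .
  qed
  have avg: "complex_of_real ((\<Sum>k<N. kern d M c (\<lambda>i. \<zeta> * (real k + 1)^i)) / real N)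
      = (\<Sum>\<alpha>\<in>A. coef \<alpha> * ((\<Sum>k<N. E \<alpha> k) / of_nat N))" for N
  proof -
    have "complex_of_real ((\<Sum>k<N. kern d M c (\<lambda>i. \<zeta> * (real k + 1)^i)) / real N)
        = (\<Sum>k<N. complex_of_real (kern d M c (\<lambda>i. \<zeta> * (real k + 1)^i))) / of_nat N"
      by simp
    also have "\<dots> = (\<Sum>k<N. \<Sum>\<alpha>\<in>A. coef \<alpha> * E \<alpha> k) / of_nat N"
      unfolding expand E_def by simp
    also have "\<dots> = (\<Sum>\<alpha>\<in>A. coef \<alpha> * ((\<Sum>k<N. E \<alpha> k) / of_nat N))"
      by (simp add: sum.swap[of _ A] sum_distrib_left sum_divide_distrib)
    finally show ?thesis .
  qed
  have lim: "(\<lambda>N. coef \<alpha> * ((\<Sum>k<N. E \<alpha> k) / of_nat N)) \<longlonglongrightarrow> coef \<alpha> * (if \<alpha> = \<alpha>M then 1 else 0)"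
    if "\<alpha> \<in> A" for \<alpha>
  proof (cases "\<alpha> = \<alpha>M")
    case True
    have "E \<alpha> k = 1" for k unfolding E_def H_def True \<alpha>M_def by simp
    hence "(\<lambda>N. (\<Sum>k<N. E \<alpha> k) / of_nat N) \<longlonglongrightarrow> 1"
      by (intro tendsto_eventually) (auto simp: eventually_sequentially intro!: exI[of _ 1])
    then show ?thesis using True by (intro tendsto_mult tendsto_const) simp
  next
    case False
    have "\<exists>i\<in>{1..d}. \<alpha> i \<noteq> M"
    proof (rule ccontr)
      assume "\<not> (\<exists>i\<in>{1..d}. \<alpha> i \<noteq> M)"
      hence "\<forall>i\<in>{1..d}. \<alpha> i = M" by blast
      hence "\<alpha> = \<alpha>M" using \<open>\<alpha> \<in> A\<close> PiE_arb[of \<alpha> "{1..d}"] unfolding A_def \<alpha>M_def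
        by (intro ext) (auto simp: restrict_def)
      thus False using False by simp
    qed
    then obtain i where i: "i \<in> {1..d}" "\<alpha> i \<noteq> M" by blast
    have "(\<lambda>N. (\<Sum>k<N. E \<alpha> k) / of_nat N) \<longlonglongrightarrow> 0"
      unfolding E_def by (rule char_avg[OF z i(1)]) (use i in \<open>simp add: H_def\<close>)
    thus ?thesis using False by (intro tendsto_mult tendsto_const) simp
  qed
  have "(\<lambda>N. \<Sum>\<alpha>\<in>A. coef \<alpha> * ((\<Sum>k<N. E \<alpha> k) / of_nat N)) \<longlonglongrightarrow> (\<Sum>\<alpha>\<in>A. coef \<alpha> * (if \<alpha> = \<alpha>M then 1 else 0))"
    by (intro tendsto_sum lim)
  also have "(\<Sum>\<alpha>\<in>A. coef \<alpha> * (if \<alpha> = \<alpha>M then 1 else 0)) = coef \<alpha>M"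
    using fA MA by (simp add: if_distrib[of "\<lambda>x. coef _ * x"] sum.delta cong: if_cong)
  also have "coef \<alpha>M = complex_of_real ((real (2*M choose M) / 4^M)^d)"
    unfolding coef_def H_def \<alpha>M_def by simp
  finally show ?thesis unfolding avg[symmetric] tendsto_of_real_iff .
qed



lemma binom_lower: "real ((2*M) choose M) / 4^M \<ge> 1 / (2 * real M + 1)"
proof -
  have "(4::nat)^M = 2^(2*M)" by (simp add: power_mult)
  also have "\<dots> = (\<Sum>a\<le>2*M. (2*M) choose a)" by (simp add: choose_row_sum)
  also have "\<dots> \<le> of_nat (card {..2*M}) * ((2*M) choose M)"
    by (rule sum_bounded_above) (rule binomial_maximum')
  finally have "(4::nat)^M \<le> (2*M+1) * ((2*M) choose M)" by simp
  hence "real ((4::nat)^M) \<le> real ((2*M+1) * ((2*M) choose M))" by (simp only: of_nat_le_iff)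
  hence "(4::real)^M \<le> (2 * real M + 1) * real ((2*M) choose M)"
    by (simp add: algebra_simps)
  thus ?thesis by (simp add: field_simps)
qed

lemma exists_M:
  fixes q :: real
  assumes "0 \<le> q" "q < 1" "d \<ge> 1"
  shows "\<exists>M\<ge>1. q^M < (1 / (2 * real M + 1))^d"
proof -
  define r where "r = root d q"
  have r: "0 \<le> r" "r < 1" "r^d = q" using assms unfolding r_def by auto
  have "norm r < 1" using r by simp
  hence "(\<lambda>M. real M * r^M) \<longlonglongrightarrow> 0"
    by (rule powser_times_n_limit_0)
  hence "(\<lambda>M. 3^d * (real M * r^M)^d) \<longlonglongrightarrow> 3^d * 0^d"
    by (intro tendsto_mult tendsto_const tendsto_power)
  moreover have "3^d * 0^d = (0::real)" using assms by (simp add: zero_power)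
  ultimately have "(\<lambda>M. 3^d * (real M * r^M)^d) \<longlonglongrightarrow> 0" by simp
  then obtain N where N: "\<And>M. M \<ge> N \<Longrightarrow> norm (3^d * (real M * r^M)^d - 0) < 1"
    using LIMSEQ_D[of _ 0 1] by fastforce
  define M where "M = max N 1"
  have M: "M \<ge> N" "M \<ge> 1" unfolding M_def by auto
  have "3^d * (real M * r^M)^d < 1" using N[OF M(1)] by simp
  moreover have "q^M * (2 * real M + 1)^d \<le> 3^d * (real M * r^M)^d"
  proof -
    have "q^M = (r^M)^d" using r(3) by (metis power_mult mult.commute)
    moreover have "(2 * real M + 1)^d \<le> (3 * real M)^d"
      using M by (intro power_mono) auto
    ultimately have "q^M * (2 * real M + 1)^d \<le> (r^M)^d * (3 * real M)^d"
      using r by (simp add: mult_left_mono)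
    also have "\<dots> = 3^d * (real M * r^M)^d" by (simp add: power_mult_distrib)
    finally show ?thesis .
  qed
  ultimately have "q^M * (2 * real M + 1)^d < 1" by linarith
  hence "q^M < (1 / (2 * real M + 1))^d" by (simp add: power_divide field_simps)
  thus ?thesis using M by blast
qed

lemma cos_sq_shift: "(cos (pi * (t - of_int n)))^2 = (cos (pi * t))^2"
proof -
  have s: "sin (of_int n * pi) = 0" by (simp add: sin_times_pi_eq_0)
  have c: "(cos (of_int n * pi))^2 = 1" using s sin_cos_squared_add[of "of_int n * pi"] by simp
  have "cos (pi * (t - of_int n)) = cos (pi * t) * cos (of_int n * pi)"
    by (simp add: right_diff_distrib cos_diff s mult.commute)
  thus ?thesis using c by (simp add: power_mult_distrib)
qed

lemma cos_sq_near:
  assumes e: "0 < e" "e \<le> 1/2" and gt: "(cos (pi * t))^2 > (cos (pi * e))^2"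
  shows "\<bar>t - of_int (round t)\<bar> < e"
proof (rule ccontr)
  define r where "r = t - of_int (round t)"
  assume "\<not> \<bar>t - of_int (round t)\<bar> < e"
  hence re: "\<bar>r\<bar> \<ge> e" unfolding r_def by simp
  have rh: "\<bar>r\<bar> \<le> 1/2" unfolding r_def using of_int_round_abs_le[of t] by (simp add: abs_minus_commute)
  have "(cos (pi * r))^2 = (cos (pi * t))^2" unfolding r_def by (rule cos_sq_shift)
  moreover have "cos (pi * r) = cos (pi * \<bar>r\<bar>)"
    by (cases "r \<ge> 0") (auto simp: abs_if)
  moreover have "cos (pi * \<bar>r\<bar>) \<le> cos (pi * e)"
    using re rh e by (intro cos_monotone_0_pi_le) auto
  moreover have "0 \<le> cos (pi * \<bar>r\<bar>)"
  proof (rule cos_ge_zero)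
    have "pi * \<bar>r\<bar> \<le> pi * (1/2)" using rh by (intro mult_left_mono) auto
    thus "pi * \<bar>r\<bar> \<le> pi / 2" by simp
    have "0 \<le> pi * \<bar>r\<bar>" by simp
    thus "- (pi / 2) \<le> pi * \<bar>r\<bar>" using pi_gt_zero by linarith
  qed
  ultimately have "(cos (pi * t))^2 \<le> (cos (pi * e))^2"
    by (metis power_mono)
  thus False using gt by simp
qed

lemma prod_le_one_factor:
  fixes f :: "nat \<Rightarrow> real"
  assumes "finite I" "i \<in> I" "\<And>j. j \<in> I \<Longrightarrow> 0 \<le> f j \<and> f j \<le> 1" "f i \<le> B"
  shows "(\<Prod>j\<in>I. f j) \<le> B"
proof -
  have "(\<Prod>j\<in>I. f j) = f i * (\<Prod>j\<in>I - {i}. f j)"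
    using assms by (simp add: prod.remove)
  also have "\<dots> \<le> f i * 1"
    using assms by (intro mult_left_mono prod_le_1) auto
  finally show ?thesis using assms by simp
qed

lemma proj_id: "x \<in> torus d \<Longrightarrow> torus_proj d x = x"
  unfolding torus_def torus_proj_def by (auto intro!: ext)

lemma frac_minus_int: "frac (x - of_int n) = frac x"
  by (metis frac_add_of_int_right diff_conv_add_uminus of_int_minus)

lemma density:
  assumes z: "\<zeta> \<notin> \<rat>" and d1: "d \<ge> 1" and V: "torus_open d V" "V \<noteq> {}"
  shows "\<exists>k\<ge>1. torus_proj d (\<lambda>i. \<zeta> * real k ^ i) \<in> V"
proof (rule ccontr)
  assume nV: "\<not> ?thesis"
  obtain x0 where x0: "x0 \<in> V" using V by auto
  have x0t: "x0 \<in> torus d" using V x0 unfolding torus_open_def by auto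
  obtain e where e: "e > 0" "\<And>z. (\<forall>i\<in>{1..d}. \<bar>z i - x0 i\<bar> < e) \<Longrightarrow> torus_proj d z \<in> V"
    using V(1) x0 proj_id[OF x0t] unfolding torus_open_def by metis
  define e' where "e' = min e (1/2)"
  have e': "0 < e'" "e' \<le> 1/2" "e' \<le> e" unfolding e'_def using e by auto
  define q where "q = (cos (pi * e'))^2"
  have q: "0 \<le> q" "q < 1"
  proof -
    show "0 \<le> q" unfolding q_def by simp
    have "cos (pi * e') < cos 0" using e' by (intro cos_monotone_0_pi) auto
    moreover have "0 \<le> cos (pi * e')"
    proof (rule cos_ge_zero)
      have "pi * e' \<le> pi * (1/2)" using e' by (intro mult_left_mono) auto
      thus "pi * e' \<le> pi / 2" by simp
      have "0 \<le> pi * e'" using e' by simp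
      thus "- (pi / 2) \<le> pi * e'" using pi_gt_zero by linarith
    qed
    ultimately show "q < 1" unfolding q_def by (simp add: abs_square_less_1)
  qed
  have W: "torus_proj d y \<in> V" if "\<forall>i\<in>{1..d}. (cos (pi * (y i - x0 i)))^2 > q" for y
  proof -
    define zz where "zz i = y i - of_int (round (y i - x0 i))" for i
    have "\<forall>i\<in>{1..d}. \<bar>zz i - x0 i\<bar> < e"
    proof
      fix i assume "i \<in> {1..d}"
      hence "\<bar>(y i - x0 i) - of_int (round (y i - x0 i))\<bar> < e'"
        using that e' unfolding q_def by (intro cos_sq_near) auto
      thus "\<bar>zz i - x0 i\<bar> < e" unfolding zz_def using e' by simp
    qed
    hence "torus_proj d zz \<in> V" by (rule e(2))
    moreover have "torus_proj d zz = torus_proj d y"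
      unfolding torus_proj_def zz_def by (simp only: frac_minus_int)
    ultimately show ?thesis by simp
  qed
  obtain M where M: "M \<ge> 1" "q^M < (1 / (2 * real M + 1))^d" using exists_M[OF q d1] by blast
  define y where "y k = (\<lambda>i. \<zeta> * (real k + 1)^i)" for k
  have kb: "kern d M x0 (y k) \<le> q^M" for k
  proof -
    have "torus_proj d (\<lambda>i. \<zeta> * real (k+1) ^ i) \<notin> V" using nV by auto
    hence "torus_proj d (y k) \<notin> V" unfolding y_def by (simp add: add.commute)
    hence "\<not> (\<forall>i\<in>{1..d}. (cos (pi * (y k i - x0 i)))^2 > q)" using W by blast
    then obtain i where i: "i \<in> {1..d}" "(cos (pi * (y k i - x0 i)))^2 \<le> q" by (auto simp: not_less)
    show ?thesis unfolding kern_def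
    proof (rule prod_le_one_factor[OF _ i(1)])
      show "finite {1..d}" by simp
      show "0 \<le> cos (pi * (y k j - x0 j)) ^ (2*M) \<and> cos (pi * (y k j - x0 j)) ^ (2*M) \<le> 1" for j
        by (simp add: power_mult abs_square_le_1 power_le_one)
      show "cos (pi * (y k i - x0 i)) ^ (2*M) \<le> q^M"
        using i(2) by (simp add: power_mult power_mono)
    qed
  qed
  have lim: "(\<lambda>N. (\<Sum>k<N. kern d M x0 (y k)) / real N) \<longlonglongrightarrow> (real (2*M choose M) / 4^M)^d"
    unfolding y_def by (rule kern_avg[OF z])
  have "(real (2*M choose M) / 4^M)^d \<le> q^M"
  proof (rule LIMSEQ_le_const2[OF lim], intro exI allI impI)
    fix N :: nat assume "N \<ge> 1"
    have "(\<Sum>k<N. kern d M x0 (y k)) \<le> (\<Sum>k<N. q^M)" by (intro sum_mono kb)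
    thus "(\<Sum>k<N. kern d M x0 (y k)) / real N \<le> q^M"
      using \<open>N \<ge> 1\<close> by (simp add: field_simps)
  qed
  moreover have "(1 / (2 * real M + 1))^d \<le> (real (2*M choose M) / 4^M)^d"
    by (intro power_mono binom_lower) auto
  ultimately show False using M(2) by linarith
qed



lemma msd_P_iff:
  fixes b :: nat and x :: real and t :: nat
  assumes b: "b \<ge> 2" and x: "x > 0" and t: "t \<ge> 1" "t + 1 \<le> b"
  shows "(\<exists>m::int. real b powr of_int m * real t \<le> \<bar>x\<bar> \<and> \<bar>x\<bar> < real b powr of_int m * real (t+1))
     \<longleftrightarrow> log (real b) (real t) \<le> frac (log (real b) x) \<and> frac (log (real b) x) < log (real b) (real t + 1)"
proof -
  define B where "B = real b"
  define Lg where "Lg = log B x"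
  have B1: "B > 1" using b unfolding B_def by simp
  have tp: "real t > 0" using t by simp
  have lt0: "log B (real t) \<ge> 0" using B1 t by simp
  have lt1: "log B (real t + 1) \<le> 1" using B1 t unfolding B_def by simp
  have key: "B powr of_int m * real t \<le> x \<and> x < B powr of_int m * real (t+1)
       \<longleftrightarrow> of_int m + log B (real t) \<le> Lg \<and> Lg < of_int m + log B (real t + 1)" for m :: int
  proof -
    have "B powr of_int m * real t \<le> x \<longleftrightarrow> log B (B powr of_int m * real t) \<le> Lg"
      unfolding Lg_def using B1 tp x by (subst log_le_cancel_iff) auto
    moreover have "log B (B powr of_int m * real t) = of_int m + log B (real t)"
      using B1 tp by (simp add: log_mult)
    moreover have "x < B powr of_int m * real (t+1) \<longleftrightarrow> Lg < log B (B powr of_int m * real (t+1))"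
      unfolding Lg_def using B1 tp x by (subst log_less_cancel_iff) auto
    moreover have "log B (B powr of_int m * real (t+1)) = of_int m + log B (real t + 1)"
      using B1 tp by (simp add: log_mult add.commute)
    ultimately show ?thesis by simp
  qed
  have "(\<exists>m::int. B powr of_int m * real t \<le> x \<and> x < B powr of_int m * real (t+1))
        \<longleftrightarrow> log B (real t) \<le> frac Lg \<and> frac Lg < log B (real t + 1)"
  proof
    assume "\<exists>m::int. B powr of_int m * real t \<le> x \<and> x < B powr of_int m * real (t+1)"
    then obtain m :: int where m: "of_int m + log B (real t) \<le> Lg" "Lg < of_int m + log B (real t + 1)"
      using key by blast
    have "of_int m \<le> Lg" "Lg < of_int m + 1" using m lt0 lt1 by linarith+
    hence "floor Lg = m" by linarith
    hence "frac Lg = Lg - of_int m" by (simp add: frac_def)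
    thus "log B (real t) \<le> frac Lg \<and> frac Lg < log B (real t + 1)" using m by linarith
  next
    assume "log B (real t) \<le> frac Lg \<and> frac Lg < log B (real t + 1)"
    hence "of_int (floor Lg) + log B (real t) \<le> Lg \<and> Lg < of_int (floor Lg) + log B (real t + 1)"
      by (simp add: frac_def)
    thus "\<exists>m::int. B powr of_int m * real t \<le> x \<and> x < B powr of_int m * real (t+1)"
      using key by blast
  qed
  thus ?thesis using x unfolding B_def Lg_def by simp
qed

lemma msd_exists:
  fixes b :: nat and f :: real
  assumes b: "b \<ge> 2" and f: "0 \<le> f" "f < 1"
  shows "\<exists>t\<in>{1..b-1}. log (real b) (real t) \<le> f \<and> f < log (real b) (real t + 1)"
proof -
  define B where "B = real b"
  have B1: "B > 1" using b unfolding B_def by simp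
  define y where "y = B powr f"
  have y: "1 \<le> y" "y < B"
  proof -
    have "B powr 0 \<le> B powr f" using B1 f by (intro powr_mono) auto
    thus "1 \<le> y" unfolding y_def using B1 by simp
    have "B powr f < B powr 1" using B1 f by (intro powr_less_mono) auto
    thus "y < B" unfolding y_def using B1 by simp
  qed
  define t where "t = nat (floor y)"
  have ty: "real t \<le> y" "y < real t + 1" unfolding t_def using y by linarith+
  have t1: "t \<ge> 1" unfolding t_def using y by linarith
  have tb: "t \<le> b - 1"
  proof -
    have "floor y < int b" using y unfolding B_def by linarith
    thus ?thesis unfolding t_def by linarith
  qed
  have "log B (real t) \<le> f"
    using ty t1 B1 unfolding y_def by (subst log_le_iff) auto
  moreover have "f < log B (real t + 1)"
    using ty t1 B1 unfolding y_def by (subst less_log_iff) auto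
  ultimately show ?thesis using t1 tb unfolding B_def by auto
qed

lemma msd_unique:
  fixes b :: nat and f :: real
  assumes b: "b \<ge> 2" and t: "t \<ge> 1" "t' \<ge> 1"
    and h: "log (real b) (real t) \<le> f" "f < log (real b) (real t + 1)"
           "log (real b) (real t') \<le> f" "f < log (real b) (real t' + 1)"
  shows "t = t'"
proof (rule ccontr)
  assume "t \<noteq> t'"
  hence "t + 1 \<le> t' \<or> t' + 1 \<le> t" by linarith
  thus False
  proof
    assume "t + 1 \<le> t'"
    hence "log (real b) (real t + 1) \<le> log (real b) (real t')" using b t by simp
    thus False using h by linarith
  next
    assume "t' + 1 \<le> t"
    hence "log (real b) (real t' + 1) \<le> log (real b) (real t)" using b t by simp
    thus False using h by linarith
  qed
qed

lemma msd_iff: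
  fixes b :: nat and x :: real and t :: nat
  assumes b: "b \<ge> 2" and x: "x > 0" and t: "t \<in> {1..b-1}"
  shows "msd b x = t \<longleftrightarrow>
     log (real b) (real t) \<le> frac (log (real b) x) \<and> frac (log (real b) x) < log (real b) (real t + 1)"
proof -
  define f where "f = frac (log (real b) x)"
  define Q where "Q j \<longleftrightarrow> j \<in> {1..b-1} \<and> (\<exists>m::int. real b powr of_int m * real j \<le> \<bar>x\<bar> \<and> \<bar>x\<bar> < real b powr of_int m * real (j+1))" for j
  have Qiff: "Q j \<longleftrightarrow> j \<in> {1..b-1} \<and> log (real b) (real j) \<le> f \<and> f < log (real b) (real j + 1)" for j
  proof (cases "j \<in> {1..b-1}")
    case True
    hence "j \<ge> 1" "j + 1 \<le> b" using b by auto
    note P = msd_P_iff[OF b x this]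
    show ?thesis unfolding Q_def f_def using True P by blast
  next
    case False thus ?thesis unfolding Q_def by blast
  qed
  obtain t0 where t0: "t0 \<in> {1..b-1}" "log (real b) (real t0) \<le> f" "f < log (real b) (real t0 + 1)"
  proof -
    have "0 \<le> f" "f < 1" unfolding f_def by (simp, rule frac_lt_1)
    from msd_exists[OF b this] show ?thesis using that by blast
  qed
  have Qt0: "Q t0" using t0 Qiff by auto
  have uniq: "j = t0" if "Q j" for j
    using that t0 Qiff msd_unique[OF b, of j t0 f] by auto
  have m: "msd b x = t0"
    unfolding msd_def Q_def[symmetric] using Qt0 uniq by (rule the_equality)
  show ?thesis
  proof
    assume "msd b x = t"
    thus "log (real b) (real t) \<le> frac (log (real b) x) \<and> frac (log (real b) x) < log (real b) (real t + 1)"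
      using m t0 unfolding f_def by simp
  next
    assume "log (real b) (real t) \<le> frac (log (real b) x) \<and> frac (log (real b) x) < log (real b) (real t + 1)"
    hence "Q t" using Qiff t unfolding f_def by auto
    thus "msd b x = t" using m uniq by simp
  qed
qed



definition Fm :: "nat \<Rightarrow> real \<Rightarrow> (nat \<Rightarrow> real) \<Rightarrow> (nat \<Rightarrow> real)" where
  "Fm d \<zeta> y = (\<lambda>i. if i \<in> {1..d} then \<zeta> + (\<Sum>j=1..i. real (i choose j) * y j) else 0)"

definition Pk :: "real \<Rightarrow> nat \<Rightarrow> (nat \<Rightarrow> real)" where
  "Pk \<zeta> k = (\<lambda>i. \<zeta> * real k ^ i)"

lemma proj_in_torus: "torus_proj d y \<in> torus d"
  unfolding torus_proj_def torus_def by (auto simp: frac_lt_1)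

lemma proj_cong: "(\<And>i. i \<in> {1..d} \<Longrightarrow> y i = z i) \<Longrightarrow> torus_proj d y = torus_proj d z"
  unfolding torus_proj_def by auto

lemma frac_int_diff: "x - y \<in> \<int> \<Longrightarrow> frac x = frac y"
  by (metis diff_add_cancel frac_add_int_left)

lemma tmap_proj: "tmap d \<zeta> (torus_proj d y) = torus_proj d (Fm d \<zeta> y)"
proof
  fix i
  show "tmap d \<zeta> (torus_proj d y) i = torus_proj d (Fm d \<zeta> y) i"
  proof (cases "i \<in> {1..d}")
    case True
    have "(\<Sum>j=1..i. real (i choose j) * torus_proj d y j) = (\<Sum>j=1..i. real (i choose j) * frac (y j))"
      using True by (intro sum.cong refl) (auto simp: torus_proj_def)
    moreover have "(\<zeta> + (\<Sum>j=1..i. real (i choose j) * frac (y j))) - (\<zeta> + (\<Sum>j=1..i. real (i choose j) * y j)) \<in> \<int>"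
    proof -
      have "(\<zeta> + (\<Sum>j=1..i. real (i choose j) * frac (y j))) - (\<zeta> + (\<Sum>j=1..i. real (i choose j) * y j))
          = (\<Sum>j=1..i. real (i choose j) * (- of_int (floor (y j))))"
        by (simp add: frac_def sum_subtractf[symmetric] algebra_simps)
      also have "\<dots> \<in> \<int>" by (intro Ints_sum Ints_mult) auto
      finally show ?thesis .
    qed
    ultimately show ?thesis using True
      by (simp add: tmap_def torus_proj_def Fm_def frac_int_diff)
  next
    case False
    have "tmap d \<zeta> (torus_proj d y) i = 0" unfolding tmap_def using False by (simp only: if_False)
    moreover have "torus_proj d (Fm d \<zeta> y) i = 0" unfolding torus_proj_def using False by (simp only: if_False)
    ultimately show ?thesis by simp
  qed
qed

lemma tmap_iter: "(tmap d \<zeta> ^^ n) (torus_proj d y) = torus_proj d ((Fm d \<zeta> ^^ n) y)"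
  by (induction n) (auto simp: tmap_proj)

lemma Fm_cong: "(\<And>i. i \<in> {1..d} \<Longrightarrow> y i = z i) \<Longrightarrow> Fm d \<zeta> y = Fm d \<zeta> z"
  unfolding Fm_def by (intro ext) (auto intro!: sum.cong)

lemma Fm_Pk: "i \<in> {1..d} \<Longrightarrow> Fm d \<zeta> (Pk \<zeta> k) i = Pk \<zeta> (k+1) i"
proof -
  assume i: "i \<in> {1..d}"
  have "(real k + 1)^i = (\<Sum>j\<le>i. real (i choose j) * real k ^ j)"
    by (simp add: binomial_ring)
  also have "\<dots> = (\<Sum>j=0..i. real (i choose j) * real k ^ j)" by (simp add: atMost_atLeast0)
  also have "\<dots> = 1 + (\<Sum>j=1..i. real (i choose j) * real k ^ j)"
    by (subst sum.atLeast_Suc_atMost) auto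
  finally have "(real k + 1)^i = 1 + (\<Sum>j=1..i. real (i choose j) * real k ^ j)" .
  hence "\<zeta> * (real k + 1)^i = \<zeta> * 1 + \<zeta> * (\<Sum>j=1..i. real (i choose j) * real k ^ j)"
    by (simp only: distrib_left)
  also have "\<zeta> * (\<Sum>j=1..i. real (i choose j) * real k ^ j) = (\<Sum>j=1..i. real (i choose j) * (\<zeta> * real k ^ j))"
    by (simp add: sum_distrib_left mult.left_commute)
  finally have e: "\<zeta> * (real k + 1)^i = \<zeta> + (\<Sum>j=1..i. real (i choose j) * (\<zeta> * real k ^ j))"
    by simp
  have "Fm d \<zeta> (Pk \<zeta> k) i = \<zeta> + (\<Sum>j=1..i. real (i choose j) * (\<zeta> * real k ^ j))"
    using i by (simp add: Fm_def Pk_def)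
  also have "\<dots> = Pk \<zeta> (k+1) i" using e by (simp add: Pk_def add.commute)
  finally show ?thesis .
qed

lemma iter_Pk: "i \<in> {1..d} \<Longrightarrow> (Fm d \<zeta> ^^ n) (Pk \<zeta> k) i = Pk \<zeta> (k+n) i"
proof (induction n arbitrary: i)
  case 0 thus ?case by simp
next
  case (Suc n)
  have "(Fm d \<zeta> ^^ Suc n) (Pk \<zeta> k) = Fm d \<zeta> ((Fm d \<zeta> ^^ n) (Pk \<zeta> k))" by simp
  also have "\<dots> = Fm d \<zeta> (Pk \<zeta> (k+n))" by (rule Fm_cong) (rule Suc.IH)
  finally have "(Fm d \<zeta> ^^ Suc n) (Pk \<zeta> k) = Fm d \<zeta> (Pk \<zeta> (k+n))" .
  thus ?case using Fm_Pk[OF Suc.prems, of \<zeta> "k+n"] by simp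
qed

lemma orbit: "(tmap d \<zeta> ^^ n) (torus_proj d (Pk \<zeta> k)) = torus_proj d (Pk \<zeta> (k+n))"
  unfolding tmap_iter by (intro proj_cong iter_Pk)

lemma Uset_wseq:
  assumes b: "b \<ge> 2" and a: "a > 0" and d: "d \<ge> 1" and t: "t \<in> {1..b-1}"
  shows "torus_proj d (Pk (log (real b) a) k) \<in> Uset b d t \<longleftrightarrow> wseq b a d k = t"
proof -
  have "log (real b) (a ^ (k ^ d)) = log (real b) a * real k ^ d"
    using a by (simp add: log_nat_power)
  hence "frac (log (real b) (a ^ (k ^ d))) = torus_proj d (Pk (log (real b) a) k) d"
    using d by (simp add: torus_proj_def Pk_def)
  thus ?thesis
    unfolding wseq_def msd_iff[OF b zero_less_power[OF a] t] Uset_def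
    using proj_in_torus[of d] by auto
qed

lemma factor_iff:
  assumes b: "b \<ge> 2" and a: "a > 0" and d: "d \<ge> 1" and u: "set u \<subseteq> {1..b-1}"
  shows "is_factor u (wseq b a d) \<longleftrightarrow>
         (\<exists>k\<ge>1. torus_proj d (Pk (log (real b) a) k) \<in> Uword b d (log (real b) a) u)"
proof -
  have "torus_proj d (Pk (log (real b) a) k) \<in> Uword b d (log (real b) a) u
        \<longleftrightarrow> (\<forall>i<length u. u ! i = wseq b a d (k + i))" for k
  proof -
    have ui: "u ! i \<in> {1..b-1}" if "i < length u" for i using u that nth_mem by blast
    have "torus_proj d (Pk (log (real b) a) k) \<in> Uword b d (log (real b) a) u
        \<longleftrightarrow> (\<forall>i<length u. torus_proj d (Pk (log (real b) a) (k+i)) \<in> Uset b d (u ! i))"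
      unfolding Uword_def using proj_in_torus[of d] by (simp add: orbit)
    also have "\<dots> \<longleftrightarrow> (\<forall>i<length u. wseq b a d (k+i) = u ! i)"
      using Uset_wseq[OF b a d ui] by simp
    finally show ?thesis by (auto simp: eq_commute)
  qed
  thus ?thesis unfolding is_factor_def by simp
qed



definition ed :: "nat \<Rightarrow> nat \<Rightarrow> real" where
  "ed d i = (if i = d then 1 else 0)"

lemma Fm_shift:
  assumes d: "d \<ge> 1"
  shows "Fm d \<zeta> (\<lambda>i. y i + s * ed d i) = (\<lambda>i. Fm d \<zeta> y i + s * ed d i)"
proof
  fix i
  show "Fm d \<zeta> (\<lambda>i. y i + s * ed d i) i = Fm d \<zeta> y i + s * ed d i"
  proof (cases "i \<in> {1..d}")
    case True
    have "(\<Sum>j=1..i. real (i choose j) * (y j + s * ed d j))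
        = (\<Sum>j=1..i. real (i choose j) * y j) + s * (\<Sum>j=1..i. real (i choose j) * ed d j)"
      by (simp add: distrib_left sum.distrib sum_distrib_left mult_ac)
    moreover have "(\<Sum>j=1..i. real (i choose j) * ed d j) = ed d i"
    proof (cases "i = d")
      case True
      have "(\<Sum>j=1..i. real (i choose j) * ed d j) = (\<Sum>j\<in>{1..i}. if j = d then real (i choose j) else 0)"
        by (intro sum.cong refl) (auto simp: ed_def)
      also have "\<dots> = real (i choose d)" using True d by (simp add: sum.delta')
      finally show ?thesis using True by (simp add: ed_def)
    next
      case False
      hence "(\<Sum>j=1..i. real (i choose j) * ed d j) = 0"
        using \<open>i \<in> {1..d}\<close> by (intro sum.neutral) (auto simp: ed_def)
      thus ?thesis using False by (simp add: ed_def)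
    qed
    ultimately show ?thesis using True by (simp add: Fm_def algebra_simps)
  next
    case False
    hence "i \<noteq> d" using d by auto
    have "Fm d \<zeta> (\<lambda>i. y i + s * ed d i) i = 0" "Fm d \<zeta> y i = 0"
      unfolding Fm_def using False by (simp_all only: if_False)
    thus ?thesis using \<open>i \<noteq> d\<close> by (simp add: ed_def)
  qed
qed

lemma Fm_shift_iter:
  assumes d: "d \<ge> 1"
  shows "(Fm d \<zeta> ^^ n) (\<lambda>i. y i + s * ed d i) = (\<lambda>i. (Fm d \<zeta> ^^ n) y i + s * ed d i)"
  by (induction n) (simp_all add: Fm_shift[OF d])

lemma binom_partial: "(\<Sum>j=1..i. real (i choose j)) \<le> 2^i"
proof -
  have "(\<Sum>j=1..i. real (i choose j)) \<le> (\<Sum>j\<le>i. real (i choose j))"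
    by (intro sum_mono2) auto
  also have "\<dots> = real (\<Sum>j\<le>i. i choose j)" by simp
  also have "\<dots> = 2^i" by (simp add: choose_row_sum)
  finally show ?thesis .
qed

lemma Fm_lip:
  assumes r0: "\<rho> \<ge> 0" and h: "\<And>i. i \<in> {1..d} \<Longrightarrow> \<bar>y i - z i\<bar> \<le> \<rho>" and i: "i \<in> {1..d}"
  shows "\<bar>Fm d \<zeta> y i - Fm d \<zeta> z i\<bar> \<le> 2^d * \<rho>"
proof -
  have "Fm d \<zeta> y i - Fm d \<zeta> z i = (\<Sum>j=1..i. real (i choose j) * (y j - z j))"
    using i by (simp add: Fm_def sum_subtractf[symmetric] right_diff_distrib)
  hence "\<bar>Fm d \<zeta> y i - Fm d \<zeta> z i\<bar> \<le> (\<Sum>j=1..i. \<bar>real (i choose j) * (y j - z j)\<bar>)"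
    by (simp add: sum_abs)
  also have "\<dots> \<le> (\<Sum>j=1..i. real (i choose j) * \<rho>)"
    using i by (intro sum_mono) (auto simp: abs_mult intro!: mult_left_mono h)
  also have "\<dots> = (\<Sum>j=1..i. real (i choose j)) * \<rho>" by (simp add: sum_distrib_right)
  also have "\<dots> \<le> 2^i * \<rho>" using r0 binom_partial by (intro mult_right_mono) auto
  also have "\<dots> \<le> 2^d * \<rho>" using r0 i by (intro mult_right_mono power_increasing) auto
  finally show ?thesis .
qed

lemma Fm_lip_iter:
  assumes r0: "\<rho> \<ge> 0" and h: "\<And>i. i \<in> {1..d} \<Longrightarrow> \<bar>y i - z i\<bar> \<le> \<rho>"
  shows "i \<in> {1..d} \<Longrightarrow> \<bar>(Fm d \<zeta> ^^ n) y i - (Fm d \<zeta> ^^ n) z i\<bar> \<le> (2^d)^n * \<rho>"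
proof (induction n arbitrary: i)
  case 0 thus ?case using h by simp
next
  case (Suc n)
  have "\<bar>Fm d \<zeta> ((Fm d \<zeta> ^^ n) y) i - Fm d \<zeta> ((Fm d \<zeta> ^^ n) z) i\<bar> \<le> 2^d * ((2^d)^n * \<rho>)"
    using r0 Suc by (intro Fm_lip) auto
  thus ?case by (simp add: mult_ac)
qed

lemma max_below:
  fixes f :: "nat \<Rightarrow> real"
  assumes "finite I" "0 < \<eta>" "\<And>i. i \<in> I \<Longrightarrow> f i < \<eta>"
  shows "\<exists>\<rho>. 0 \<le> \<rho> \<and> \<rho> < \<eta> \<and> (\<forall>i\<in>I. f i \<le> \<rho>)"
proof (intro exI conjI)
  define \<rho> where "\<rho> = Max (insert 0 (f ` I))"
  show "0 \<le> \<rho>" unfolding \<rho>_def using assms by simp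
  show "\<rho> < \<eta>" unfolding \<rho>_def using assms by simp
  show "\<forall>i\<in>I. f i \<le> \<rho>" unfolding \<rho>_def using assms by simp
qed

lemma proj_eq_Ints: "torus_proj d y = torus_proj d z \<Longrightarrow> i \<in> {1..d} \<Longrightarrow> y i - z i \<in> \<int>"
proof -
  assume "torus_proj d y = torus_proj d z" "i \<in> {1..d}"
  hence "frac (y i) = frac (z i)" unfolding torus_proj_def by (metis (mono_tags))
  then obtain n where "y i = z i + of_int n" by (rule frac_eqE)
  thus ?thesis by simp
qed

lemma proj_cong': "(\<And>i. i \<in> {1..d} \<Longrightarrow> frac (y i) = frac (z i)) \<Longrightarrow> torus_proj d y = torus_proj d z"
  unfolding torus_proj_def by auto

lemma frac_small_shift: "0 \<le> frac Y + \<delta> \<Longrightarrow> frac Y + \<delta> < 1 \<Longrightarrow> frac (Y + \<delta>) = frac Y + \<delta>"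
  by (subst frac_unique_iff) (simp add: frac_def)

lemma interior_from_point:
  assumes b: "b \<ge> 2" and d: "d \<ge> 1" and u: "set u \<subseteq> {1..b-1}"
    and y0: "torus_proj d y0 \<in> Uword b d \<zeta> u"
  shows "torus_nonempty_interior d (Uword b d \<zeta> u)"
proof -
  define L where "L = length u"
  define Y where "Y n = (Fm d \<zeta> ^^ n) y0" for n
  define s where "s n = frac (Y n d)" for n
  define r where "r n = log (real b) (real (u!n) + 1)" for n
  have sr: "log (real b) (real (u!n)) \<le> s n \<and> s n < r n" if "n < L" for n
  proof -
    have "(tmap d \<zeta> ^^ n) (torus_proj d y0) \<in> Uset b d (u!n)"
      using y0 that unfolding Uword_def L_def by auto
    hence "torus_proj d (Y n) \<in> Uset b d (u!n)" unfolding Y_def tmap_iter .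
    moreover have "torus_proj d (Y n) d = s n" using d unfolding torus_proj_def s_def by simp
    ultimately show ?thesis unfolding Uset_def r_def by auto
  qed
  have r1: "r n \<le> 1" if "n < L" for n
  proof -
    have "u!n \<in> {1..b-1}" using u that nth_mem unfolding L_def by blast
    hence "real (u!n) + 1 \<le> real b" "real (u!n) + 1 > 0" by auto
    thus ?thesis unfolding r_def using b by simp
  qed
  define g where "g = Min (insert 1 ((\<lambda>n. r n - s n) ` {..<L}))"
  have g0: "g > 0" unfolding g_def using sr by (simp add: Min_gr_iff)
  have gr: "g \<le> r n - s n" if "n < L" for n unfolding g_def using that by (intro Min_le) auto
  define C where "C = (2::real)^d"
  have C1: "C \<ge> 1" unfolding C_def by simp
  define \<eta> where "\<eta> = g / (4 * C^L)"
  have \<eta>0: "\<eta> > 0" using g0 C1 unfolding \<eta>_def by simp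
  define y1 where "y1 = (\<lambda>i. y0 i + (g/2) * ed d i)"
  define B where "B = {z. \<forall>i\<in>{1..d}. \<bar>z i - y1 i\<bar> < \<eta>}"
  define V where "V = torus_proj d ` B"
  have inU: "torus_proj d z \<in> Uword b d \<zeta> u" if zB: "z \<in> B" for z
  proof -
    obtain \<rho> where \<rho>: "0 \<le> \<rho>" "\<rho> < \<eta>" "\<forall>i\<in>{1..d}. \<bar>z i - y1 i\<bar> \<le> \<rho>"
      using max_below[of "{1..d}" \<eta> "\<lambda>i. \<bar>z i - y1 i\<bar>"] \<eta>0 zB unfolding B_def by auto
    have "(tmap d \<zeta> ^^ n) (torus_proj d z) \<in> Uset b d (u!n)" if n: "n < L" for n
    proof -
      have dd: "d \<in> {1..d}" using d by simp
      have "\<bar>(Fm d \<zeta> ^^ n) z d - (Fm d \<zeta> ^^ n) y1 d\<bar> \<le> C^n * \<rho>"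
        unfolding C_def by (rule Fm_lip_iter[OF \<rho>(1) _ dd]) (use \<rho>(3) in auto)
      also have "C^n * \<rho> \<le> C^L * \<rho>" using C1 n \<rho> by (intro mult_right_mono power_increasing) auto
      also have "C^L * \<rho> < C^L * \<eta>" using C1 \<rho> by (intro mult_strict_left_mono) auto
      also have "C^L * \<eta> = g/4" unfolding \<eta>_def using C1 by (simp add: field_simps)
      finally have close: "\<bar>(Fm d \<zeta> ^^ n) z d - (Fm d \<zeta> ^^ n) y1 d\<bar> < g/4" .
      have y1n: "(Fm d \<zeta> ^^ n) y1 d = Y n d + g/2"
        unfolding y1_def Fm_shift_iter[OF d] Y_def by (simp add: ed_def)
      define \<delta> where "\<delta> = (Fm d \<zeta> ^^ n) z d - Y n d"
      have \<delta>: "g/4 < \<delta>" "\<delta> < 3*g/4" using close unfolding y1n \<delta>_def abs_less_iff by linarith+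
      have lt1: "s n + \<delta> < 1" using gr[OF n] r1[OF n] \<delta> g0 by linarith
      have ge0: "0 \<le> s n + \<delta>" using \<delta> g0 frac_ge_0[of "Y n d"] unfolding s_def by linarith
      have fr: "frac ((Fm d \<zeta> ^^ n) z d) = s n + \<delta>"
        using frac_small_shift[of "Y n d" \<delta>] lt1 ge0 unfolding s_def \<delta>_def by simp
      have "log (real b) (real (u!n)) \<le> frac ((Fm d \<zeta> ^^ n) z d)"
        using fr sr[OF n] \<delta> g0 by linarith
      moreover have "frac ((Fm d \<zeta> ^^ n) z d) < log (real b) (real (u!n) + 1)"
        using fr gr[OF n] \<delta> g0 unfolding r_def by linarith
      moreover have "torus_proj d ((Fm d \<zeta> ^^ n) z) d = frac ((Fm d \<zeta> ^^ n) z d)"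
        using d unfolding torus_proj_def by simp
      ultimately show ?thesis
        unfolding tmap_iter Uset_def using proj_in_torus[of d] by simp
    qed
    thus ?thesis unfolding Uword_def L_def using proj_in_torus[of d] by auto
  qed
  have "torus_open d V" unfolding torus_open_def
  proof (intro conjI allI impI)
    show "V \<subseteq> torus d" unfolding V_def using proj_in_torus by auto
    fix y assume "torus_proj d y \<in> V"
    then obtain z where z: "z \<in> B" "torus_proj d y = torus_proj d z" unfolding V_def by auto
    obtain \<rho> where \<rho>: "0 \<le> \<rho>" "\<rho> < \<eta>" "\<forall>i\<in>{1..d}. \<bar>z i - y1 i\<bar> \<le> \<rho>"
      using max_below[of "{1..d}" \<eta> "\<lambda>i. \<bar>z i - y1 i\<bar>"] \<eta>0 z(1) unfolding B_def by auto
    show "\<exists>e>0. \<forall>w. (\<forall>i\<in>{1..d}. \<bar>w i - y i\<bar> < e) \<longrightarrow> torus_proj d w \<in> V"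
    proof (intro exI conjI allI impI)
      show "\<eta> - \<rho> > 0" using \<rho> by simp
      fix w assume w: "\<forall>i\<in>{1..d}. \<bar>w i - y i\<bar> < \<eta> - \<rho>"
      define w' where "w' = (\<lambda>i. w i - y i + z i)"
      have "w' \<in> B" unfolding B_def w'_def
      proof (intro CollectI ballI)
        fix i assume i: "i \<in> {1..d}"
        have "\<bar>w i - y i + z i - y1 i\<bar> \<le> \<bar>w i - y i\<bar> + \<bar>z i - y1 i\<bar>" by simp
        thus "\<bar>w i - y i + z i - y1 i\<bar> < \<eta>" using w \<rho> i by fastforce
      qed
      moreover have "torus_proj d w' = torus_proj d w"
      proof (rule proj_cong')
        show "frac (w' i) = frac (w i)" if "i \<in> {1..d}" for i
        proof (rule frac_int_diff)
          have "y i - z i \<in> \<int>" by (rule proj_eq_Ints[OF z(2) that])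
          hence "- (y i - z i) \<in> \<int>" by (rule Ints_minus)
          thus "w' i - w i \<in> \<int>" unfolding w'_def by (simp add: algebra_simps)
        qed
      qed
      ultimately show "torus_proj d w \<in> V" unfolding V_def by (metis image_eqI)
    qed
  qed
  moreover have "V \<noteq> {}"
  proof -
    have "y1 \<in> B" unfolding B_def using \<eta>0 by simp
    thus ?thesis unfolding V_def by auto
  qed
  moreover have "V \<subseteq> Uword b d \<zeta> u" unfolding V_def using inU by auto
  ultimately show ?thesis unfolding torus_nonempty_interior_def by blast
qed


theorem mainTheorem3:
  fixes d b :: nat and a :: real and u :: "nat list"
  assumes "d \<ge> 1" and "b \<ge> 5" and "a > 0"
    and "log (real b) a \<notin> \<rat>"
    and "set u \<subseteq> {1..b-1}"
  shows "is_factor u (wseq b a d) \<longleftrightarrow>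
         torus_nonempty_interior d (Uword b d (log (real b) a) u)"
proof -
  have b2: "b \<ge> 2" using assms(2) by simp
  note fi = factor_iff[OF b2 assms(3) assms(1) assms(5)]
  show ?thesis
  proof
    assume "is_factor u (wseq b a d)"
    then obtain k where "torus_proj d (Pk (log (real b) a) k) \<in> Uword b d (log (real b) a) u"
      using fi by auto
    thus "torus_nonempty_interior d (Uword b d (log (real b) a) u)"
      by (rule interior_from_point[OF b2 assms(1) assms(5)])
  next
    assume "torus_nonempty_interior d (Uword b d (log (real b) a) u)"
    then obtain V where V: "torus_open d V" "V \<noteq> {}" "V \<subseteq> Uword b d (log (real b) a) u"
      unfolding torus_nonempty_interior_def by blast
    obtain k where k: "k \<ge> 1" "torus_proj d (\<lambda>i. log (real b) a * real k ^ i) \<in> V"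
      using density[OF assms(4) assms(1) V(1) V(2)] by blast
    hence "torus_proj d (Pk (log (real b) a) k) \<in> Uword b d (log (real b) a) u"
      using V(3) unfolding Pk_def by auto
    thus "is_factor u (wseq b a d)" using fi k(1) by blast
  qed
qed

end
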